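(* Let $\mathscr{A}$ be a $C^*$-algebra with identity such that the set $\mathscr{A}'_m$ of all linear multiplicative functionals $\varphi\colon\mathscr{A}\to\mathbb{C}$ is total (i.e., if $\varphi(a)=0$ for all $\varphi\in\mathscr{A}'_m$ then $a=0$). Let $\mathscr{X}$ be a right $\mathscr{A}$-module which is also a normed space. Let $n\geq 2$ and let $E, F\colon \mathscr{X}^n\to\mathscr{A}$ be multi-$\mathscr{A}$-linear functions, and assume that $E$ is bounded and strong. Suppose that for all $x_1,\dots,x_n\in\mathscr{X}$, $E(x_1,\dots,x_n)=0$ implies $F(x_1,\dots,x_n)=0$. Then the following are equivalent: (i) there exists $z\in\mathscr{X}$ such that both $E(z,\dots,z)$ and $F(z,\dots,z)$ belong to $G_{\mathscr{A}}$; (ii) for all $z_1,\dots,z_n\in\mathscr{X}$, $E(z_1,\dots,z_n)\in G_{\mathscr{A}}$ implies $F(z_1,\dots,z_n)\in G_{\mathscr{A}}$.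
   Context: $G_{\mathscr{A}}$ denotes the set of invertible elements of $\mathscr{A}$. A right $\mathscr{A}$-module $\mathscr{X}$ is a complex vector space with a right $\mathscr{A}$-action satisfying $(\alpha x)a=x(\alpha a)=\alpha(xa)$. A function $F\colon\mathscr{X}^n\to\mathscr{A}$ is multi-$\mathscr{A}$-linear if for all $x_1,\dots,x_n,y_j\in\mathscr{X}$, $\alpha\in\mathbb{C}$, $a\in\mathscr{A}$ and $j=1,\dots,n$: (A) $F$ is additive in the $j$-th variable; (B) $F(x_1,\dots,\alpha x_j a,\dots,x_n)=\alpha F(x_1,\dots,x_n)a$ if $j$ is even; (C) $F(x_1,\dots,\alpha x_j a,\dots,x_n)=\overline{\alpha}a^*F(x_1,\dots,x_n)$ if $j$ is odd. $F$ is bounded if there is $M$ with $\|F(x_1,\dots,x_n)\|\le M\|x_1\|\cdots\|x_n\|$ for all $x_i$. $F$ is strong if there exists $w\in\mathscr{X}$ with $F(w,w,\dots,w)\in G_{\mathscr{A}}$. *)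

theory Defs
  imports Complex_Main
begin

class complex_normed_vector = real_normed_vector +
  fixes scaleC :: "complex \<Rightarrow> 'a \<Rightarrow> 'a"
  assumes scaleC_add_right: "scaleC c (x + y) = scaleC c x + scaleC c y"
    and scaleC_add_left: "scaleC (c + d) x = scaleC c x + scaleC d x"
    and scaleC_scaleC: "scaleC c (scaleC d x) = scaleC (c * d) x"
    and scaleC_one: "scaleC 1 x = x"
    and scaleR_scaleC: "scaleR r x = scaleC (complex_of_real r) x"
    and norm_scaleC: "norm (scaleC c x) = cmod c * norm x"

class cstar_algebra = complex_normed_vector + real_normed_algebra_1 + banach +
  fixes adj :: "'a \<Rightarrow> 'a"
  assumes mult_scaleC_left: "scaleC c x * y = scaleC c (x * y)"
    and mult_scaleC_right: "x * scaleC c y = scaleC c (x * y)"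
    and adj_adj: "adj (adj x) = x"
    and adj_add: "adj (x + y) = adj x + adj y"
    and adj_scaleC: "adj (scaleC c x) = scaleC (cnj c) (adj x)"
    and adj_mult: "adj (x * y) = adj y * adj x"
    and cstar_identity: "norm (adj x * x) = (norm x)\<^sup>2"

definition invertibles :: "'a::cstar_algebra set" where
  "invertibles = {a. \<exists>b. a * b = 1 \<and> b * a = 1}"

definition mult_functional :: "('a::cstar_algebra \<Rightarrow> complex) \<Rightarrow> bool" where
  "mult_functional \<phi> \<longleftrightarrow>
     (\<forall>a b. \<phi> (a + b) = \<phi> a + \<phi> b) \<and>
     (\<forall>c a. \<phi> (scaleC c a) = c * \<phi> a) \<and>
     (\<forall>a b. \<phi> (a * b) = \<phi> a * \<phi> b)"

definition right_module :: "('x::complex_normed_vector \<Rightarrow> 'a::cstar_algebra \<Rightarrow> 'x) \<Rightarrow> bool" where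
  "right_module act \<longleftrightarrow>
     (\<forall>x y a. act (x + y) a = act x a + act y a) \<and>
     (\<forall>x a b. act x (a + b) = act x a + act x b) \<and>
     (\<forall>x a b. act x (a * b) = act (act x a) b) \<and>
     (\<forall>\<alpha> x a. act (scaleC \<alpha> x) a = act x (scaleC \<alpha> a) \<and>
                act x (scaleC \<alpha> a) = scaleC \<alpha> (act x a))"

text \<open>Multi-A-linear functions X^n -> A, arguments as lists of length n.
  List index i corresponds to the variable number j = i + 1.\<close>
definition multi_A_linear ::
  "('x::complex_normed_vector \<Rightarrow> 'a::cstar_algebra \<Rightarrow> 'x) \<Rightarrow> nat \<Rightarrow> ('x list \<Rightarrow> 'a) \<Rightarrow> bool" where
  "multi_A_linear act n F \<longleftrightarrow>
     (\<forall>xs. length xs = n \<longrightarrow> (\<forall>i<n.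
        (\<forall>y. F (xs[i := xs ! i + y]) = F xs + F (xs[i := y])) \<and>
        (\<forall>\<alpha> a. F (xs[i := act (scaleC \<alpha> (xs ! i)) a]) =
           (if even (i + 1) then scaleC \<alpha> (F xs) * a
            else scaleC (cnj \<alpha>) (adj a * F xs)))))"

definition bounded_multi :: "nat \<Rightarrow> ('x::complex_normed_vector list \<Rightarrow> 'a::cstar_algebra) \<Rightarrow> bool" where
  "bounded_multi n F \<longleftrightarrow>
     (\<exists>M. \<forall>xs. length xs = n \<longrightarrow> norm (F xs) \<le> M * prod_list (map norm xs))"

definition strong_multi :: "nat \<Rightarrow> ('x::complex_normed_vector list \<Rightarrow> 'a::cstar_algebra) \<Rightarrow> bool" where
  "strong_multi n F \<longleftrightarrow> (\<exists>w. F (replicate n w) \<in> invertibles)"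

end

theory Submission
  imports Defs
begin

theorem corollary3p8:
  fixes act :: "'x::complex_normed_vector \<Rightarrow> 'a::cstar_algebra \<Rightarrow> 'x"
    and E F :: "'x list \<Rightarrow> 'a" and n :: nat
  assumes total: "\<forall>a::'a. (\<forall>\<phi>. mult_functional \<phi> \<longrightarrow> \<phi> a = 0) \<longrightarrow> a = 0"
    and module: "right_module act"
    and n: "n \<ge> 2"
    and E_lin: "multi_A_linear act n E"
    and F_lin: "multi_A_linear act n F"
    and E_bdd: "bounded_multi n E"
    and E_strong: "strong_multi n E"
    and EF: "\<forall>xs. length xs = n \<longrightarrow> E xs = 0 \<longrightarrow> F xs = 0"
  shows "(\<exists>z. E (replicate n z) \<in> invertibles \<and> F (replicate n z) \<in> invertibles) \<longleftrightarrow>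
         (\<forall>zs. length zs = n \<longrightarrow> E zs \<in> invertibles \<longrightarrow> F zs \<in> invertibles)"
proof
  assume "\<forall>zs. length zs = n \<longrightarrow> E zs \<in> invertibles \<longrightarrow> F zs \<in> invertibles"
  moreover obtain w where "E (replicate n w) \<in> invertibles"
    using E_strong unfolding strong_multi_def by blast
  ultimately show "\<exists>z. E (replicate n z) \<in> invertibles \<and> F (replicate n z) \<in> invertibles"
    by auto
next
  assume "\<exists>z. E (replicate n z) \<in> invertibles \<and> F (replicate n z) \<in> invertibles"
  then obtain z where zE: "E (replicate n z) \<in> invertibles"
    and zF: "F (replicate n z) \<in> invertibles" by blast
  have comm: "x * y = y * x" for x y :: 'a
  proof -
    have "\<phi> (x * y - y * x) = 0" if "mult_functional \<phi>" for \<phi>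
    proof -
      have add: "\<phi> (a + b) = \<phi> a + \<phi> b" for a b
        using that unfolding mult_functional_def by blast
      have mul: "\<phi> (a * b) = \<phi> a * \<phi> b" for a b
        using that unfolding mult_functional_def by blast
      have "\<phi> (x * y - y * x) + \<phi> (y * x) = \<phi> (x * y)"
        using add[of "x * y - y * x" "y * x"] by simp
      thus ?thesis using mul[of x y] mul[of y x] by simp
    qed
    hence "x * y - y * x = 0" using total by blast
    thus ?thesis by simp
  qed
  have Eadd: "E (xs[i := xs ! i + y]) = E xs + E (xs[i := y])"
    if "length xs = n" "i < n" for xs i y
    using E_lin that unfolding multi_A_linear_def by blast
  have Fadd: "F (xs[i := xs ! i + y]) = F xs + F (xs[i := y])"
    if "length xs = n" "i < n" for xs i y
    using F_lin that unfolding multi_A_linear_def by blast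
  have Eact: "E (xs[i := act (xs ! i) a]) = (if even (i + 1) then E xs * a else adj a * E xs)"
    if "length xs = n" "i < n" for xs i a
  proof -
    have "E (xs[i := act (scaleC 1 (xs ! i)) a]) =
      (if even (i + 1) then scaleC 1 (E xs) * a else scaleC (cnj 1) (adj a * E xs))"
      using E_lin that unfolding multi_A_linear_def by blast
    thus ?thesis by (simp add: scaleC_one)
  qed
  have Fact: "F (xs[i := act (xs ! i) a]) = (if even (i + 1) then F xs * a else adj a * F xs)"
    if "length xs = n" "i < n" for xs i a
  proof -
    have "F (xs[i := act (scaleC 1 (xs ! i)) a]) =
      (if even (i + 1) then scaleC 1 (F xs) * a else scaleC (cnj 1) (adj a * F xs))"
      using F_lin that unfolding multi_A_linear_def by blast
    thus ?thesis by (simp add: scaleC_one)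
  qed
  obtain u' where u': "E (replicate n z) * u' = 1" "u' * E (replicate n z) = 1"
    using zE unfolding invertibles_def by blast
  define c where "c = F (replicate n z) * u'"
  have c_inv: "c \<in> invertibles"
  proof -
    obtain f' where f': "F (replicate n z) * f' = 1" "f' * F (replicate n z) = 1"
      using zF unfolding invertibles_def by blast
    have "c * (E (replicate n z) * f') = 1"
      unfolding c_def using u' f' by (metis comm mult.assoc mult_1_right)
    moreover have "(E (replicate n z) * f') * c = 1"
      using calculation comm by metis
    ultimately show ?thesis unfolding invertibles_def by blast
  qed
  define P where "P V \<longleftrightarrow> F V = c * E V" for V
  have Pz: "P (replicate n z)"
    unfolding P_def c_def using u' by (metis comm mult.assoc mult_1_right)
  have L: "P ws"
    if ws: "length ws = n" "i < n" "E (ws[i := t]) \<in> invertibles" "P (ws[i := t])" for ws i t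
  proof -
    define q where "q = E (ws[i := t])"
    obtain q' where q': "q * q' = 1" "q' * q = 1"
      using ws(3) unfolding invertibles_def q_def by blast
    have l: "length (ws[i := t]) = n" and t: "ws[i := t] ! i = t" using ws by auto
    have Ea: "E (ws[i := act t a]) = (if even (i + 1) then q * a else adj a * q)" for a
      using Eact[OF l ws(2), of a] t unfolding q_def by simp
    have Fa: "F (ws[i := act t a]) = (if even (i + 1) then c * q * a else adj a * (c * q))" for a
      using Fact[OF l ws(2), of a] t ws(4) unfolding q_def P_def by simp
    have key: "F ws + F (ws[i := act t a]) = 0" if "E ws + E (ws[i := act t a]) = 0" for a
      using EF Eadd[OF ws(1,2)] Fadd[OF ws(1,2)] that ws(1)
      by (metis length_list_update)
    show ?thesis
    proof (cases "even (i + 1)")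
      case True
      define a where "a = - (q' * E ws)"
      have "E ws + E (ws[i := act t a]) = 0"
        using Ea True q' unfolding a_def by (simp add: mult.assoc[symmetric])
      hence "F ws + c * q * a = 0" using key Fa True by simp
      hence "F ws = c * E ws" using q' unfolding a_def
        by (simp add: mult.assoc[symmetric] eq_neg_iff_add_eq_0[symmetric])
           (metis mult.assoc mult_1_right)
      thus ?thesis unfolding P_def .
    next
      case False
      define a where "a = adj (- (q' * E ws))"
      have aa: "adj a = - (q' * E ws)" unfolding a_def by (simp add: adj_adj)
      have "E ws + E (ws[i := act t a]) = 0"
        using Ea False q' aa comm by (simp add: mult.assoc) (metis mult.assoc mult_1_right)
      hence "F ws + adj a * (c * q) = 0" using key Fa False by simp
      hence "F ws = q' * E ws * (c * q)" using aa
        by (simp add: eq_neg_iff_add_eq_0[symmetric])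
      also have "\<dots> = c * E ws * (q' * q)" by (metis comm mult.assoc)
      finally show ?thesis unfolding P_def using q' by simp
    qed
  qed
  have main: "\<forall>xs V. length xs = n \<longrightarrow> length V = n \<longrightarrow>
      card {j. j < n \<and> xs ! j \<noteq> V ! j} \<le> k \<longrightarrow> E V \<in> invertibles \<longrightarrow> P V \<longrightarrow> P xs" for k
  proof (induction k)
    case 0
    show ?case
    proof (intro allI impI)
      fix xs V :: "'x list"
      assume a: "length xs = n" "length V = n" "card {j. j < n \<and> xs ! j \<noteq> V ! j} \<le> 0"
        "E V \<in> invertibles" "P V"
      have "finite {j. j < n \<and> xs ! j \<noteq> V ! j}" by simp
      hence "{j. j < n \<and> xs ! j \<noteq> V ! j} = {}" using a(3) by simp
      hence "xs = V" using a(1,2) by (metis (mono_tags, lifting) empty_Collect_eq nth_equalityI)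
      thus "P xs" using a(5) by simp
    qed
  next
    case (Suc k)
    show ?case
    proof (intro allI impI)
      fix xs V :: "'x list"
      assume a: "length xs = n" "length V = n" "card {j. j < n \<and> xs ! j \<noteq> V ! j} \<le> Suc k"
        "E V \<in> invertibles" "P V"
      show "P xs"
      proof (cases "{j. j < n \<and> xs ! j \<noteq> V ! j} = {}")
        case True
        hence "xs = V" using a(1,2) by (metis (mono_tags, lifting) empty_Collect_eq nth_equalityI)
        thus "P xs" using a(5) by simp
      next
        case False
        then obtain j where j: "j < n" "xs ! j \<noteq> V ! j" by blast
        have cardD: "card {i. i < n \<and> (xs[j := w]) ! i \<noteq> V' ! i} \<le> k"
          if "V' = V[j := w]" for w V'
        proof -
          have "{i. i < n \<and> (xs[j := w]) ! i \<noteq> V' ! i} = {i. i < n \<and> xs ! i \<noteq> V ! i} - {j}"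
            using that a(1,2) j by (auto simp: nth_list_update)
          moreover have "j \<in> {i. i < n \<and> xs ! i \<noteq> V ! i}" using j by simp
          moreover have "finite {i. i < n \<and> xs ! i \<noteq> V ! i}" by simp
          ultimately show ?thesis using a(3) by (simp add: card_Diff_singleton)
        qed
        obtain v' where v': "E V * v' = 1" "v' * E V = 1"
          using a(4) unfolding invertibles_def by blast
        define r where "r = 1 - E (V[j := xs ! j])"
        define b where "b = (if even (j + 1) then v' * r else adj (r * v'))"
        have lVx: "length (V[j := xs ! j]) = n" using a(2) by simp
        define V' where "V' = V[j := xs ! j + act (V ! j) b]"
        have EV': "E V' = 1"
        proof -
          have "E V' = E (V[j := xs ! j]) + E (V[j := act (V ! j) b])"
            using Eadd[OF lVx j(1), of "act (V ! j) b"] a(2) j(1) unfolding V'_def by simp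
          also have "E (V[j := act (V ! j) b]) = r"
            using Eact[OF a(2) j(1), of b] v' unfolding b_def
            by (simp add: adj_adj mult.assoc[symmetric]) (metis mult.assoc mult_1_right)
          finally show ?thesis unfolding r_def by simp
        qed
        have PV': "P V'"
        proof (rule L[of V' j "V ! j"])
          have "V'[j := V ! j] = V" unfolding V'_def by simp
          thus "E (V'[j := V ! j]) \<in> invertibles" "P (V'[j := V ! j])" using a(4,5) by simp_all
        qed (use a(2) j(1) V'_def in auto)
        have lV': "length V' = n" using a(2) V'_def by simp
        have P1: "P (xs[j := xs ! j + act (V ! j) b])"
        proof -
          have "E V' \<in> invertibles" using EV' unfolding invertibles_def by auto
          moreover have "length (xs[j := xs ! j + act (V ! j) b]) = n" using a(1) by simp
          ultimately show ?thesis
            using Suc.IH lV' cardD[of V' "xs ! j + act (V ! j) b"] V'_def PV' by blast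
        qed
        have P2': "P (xs[j := V ! j])"
          using Suc.IH a cardD[of V "V ! j"] by auto
        have lxV: "length (xs[j := V ! j]) = n" using a(1) by simp
        have P2: "P (xs[j := act (V ! j) b])"
        proof -
          have e: "E (xs[j := act (V ! j) b]) = (if even (j + 1) then E (xs[j := V ! j]) * b else adj b * E (xs[j := V ! j]))"
            using Eact[OF lxV j(1), of b] a(1) j(1) by simp
          have f: "F (xs[j := act (V ! j) b]) = (if even (j + 1) then F (xs[j := V ! j]) * b else adj b * F (xs[j := V ! j]))"
            using Fact[OF lxV j(1), of b] a(1) j(1) by simp
          show ?thesis using e f P2' unfolding P_def by (simp add: mult.assoc) (metis comm mult.assoc)
        qed
        show "P xs"
          using P1 P2 Eadd[OF a(1) j(1), of "act (V ! j) b"] Fadd[OF a(1) j(1), of "act (V ! j) b"]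
          unfolding P_def by (simp add: distrib_left)
      qed
    qed
  qed
  show "\<forall>zs. length zs = n \<longrightarrow> E zs \<in> invertibles \<longrightarrow> F zs \<in> invertibles"
  proof (intro allI impI)
    fix zs :: "'x list"
    assume zs: "length zs = n" "E zs \<in> invertibles"
    have "card {j. j < n \<and> zs ! j \<noteq> replicate n z ! j} \<le> n"
      by (rule order_trans[OF card_mono[of "{..<n}"]]) auto
    moreover have "length (replicate n z) = n" by simp
    ultimately have "P zs" using main[of n, rule_format, of zs "replicate n z"] zs(1) zE Pz by blast
    hence Fz: "F zs = c * E zs" unfolding P_def .
    obtain e' where e': "E zs * e' = 1" "e' * E zs = 1"
      using zs(2) unfolding invertibles_def by blast
    obtain c' where c': "c * c' = 1" "c' * c = 1"
      using c_inv unfolding invertibles_def by blast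
    have "(c * E zs) * (e' * c') = 1" using e' c' by (metis mult.assoc mult_1_left)
    moreover have "(e' * c') * (c * E zs) = 1" using calculation comm by metis
    ultimately show "F zs \<in> invertibles" unfolding invertibles_def Fz by blast
  qed
qed

end
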